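(* Let $\Gamma<H$ be a cocompact discrete subgroup of the three-dimensional Heisenberg group $H$ with the metric and magnetic form of the context. For each $E>|B|$, the set $\mathrm{Per}^E(\Gamma\backslash H)$ is dense in $S^E(\Gamma\backslash H)$.
   Context: $H$ is the simply connected Lie group whose Lie algebra has basis $X,Y,Z$ with only nonzero bracket $[X,Y]=Z$. Fix $A>0$; $g$ is the left-invariant Riemannian metric with $\{X/\sqrt A,Y/\sqrt A,Z\}$ orthonormal. With $\{\alpha,\beta,\zeta\}$ the dual basis and $B\in\mathbb R$, the magnetic form is $\Omega=d(B\zeta)=-B\alpha\wedge\beta$. A magnetic geodesic is a curve $\sigma$ with $\nabla_{\sigma'}\sigma'=F\sigma'$, where $\nabla$ is the Levi-Civita connection and $F$ is defined by $g(Fu,v)=\Omega(u,v)$; magnetic geodesics have constant speed (energy). $\Gamma\backslash H$ carries the induced metric and magnetic form. For a Riemannian manifold $M$ with magnetic form, $S^EM=\{V\in TM:|V|=E\}$, $\sigma_V$ is the magnetic geodesic with $\sigma_V'(0)=V$, and $\mathrm{Per}^E(M)=\{V\in S^EM:\sigma_V\text{ is periodic}\}$. *)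

theory Defs
  imports "HOL-Analysis.Analysis"
begin

text \<open>Model of the Heisenberg group H: R^3 with the product
  (x,y,z)(x',y',z') = (x+x', y+y', z+z'+x y').  Identity 0.
  Its left-invariant vector fields are X = d/dx, Y = d/dy + x d/dz, Z = d/dz,
  which satisfy [X,Y] = Z with all other brackets zero; at the identity
  they are the standard basis vectors.\<close>

definition hmul :: "real^3 \<Rightarrow> real^3 \<Rightarrow> real^3" where
  "hmul p q = vector [p$1 + q$1, p$2 + q$2, p$3 + q$3 + p$1 * q$2]"

definition hinv :: "real^3 \<Rightarrow> real^3" where
  "hinv p = vector [- p$1, - p$2, - p$3 + p$1 * p$2]"

text \<open>Dual coframe alpha, beta, zeta of X, Y, Z, evaluated at a point p on a
  tangent vector u (tangent vectors written in the coordinates of R^3).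
  Equivalently, (alpha u, beta u, zeta u) is the left-trivialisation
  dL_{p^{-1}} u expressed in the basis X, Y, Z.\<close>

definition h_alpha :: "real^3 \<Rightarrow> real^3 \<Rightarrow> real" where
  "h_alpha p u = u$1"

definition h_beta :: "real^3 \<Rightarrow> real^3 \<Rightarrow> real" where
  "h_beta p u = u$2"

definition h_zeta :: "real^3 \<Rightarrow> real^3 \<Rightarrow> real" where
  "h_zeta p u = u$3 - p$1 * u$2"

text \<open>Left-invariant metric with {X/sqrt A, Y/sqrt A, Z} orthonormal.\<close>

definition gmetric :: "real \<Rightarrow> real^3 \<Rightarrow> real^3 \<Rightarrow> real^3 \<Rightarrow> real" where
  "gmetric A p u v =
     A * h_alpha p u * h_alpha p v + A * h_beta p u * h_beta p v + h_zeta p u * h_zeta p v"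

text \<open>Magnetic 2-form Omega = d(B zeta) = - B alpha \<and> beta.\<close>

definition mag_form :: "real \<Rightarrow> real^3 \<Rightarrow> real^3 \<Rightarrow> real^3 \<Rightarrow> real" where
  "mag_form B p u v = - B * (h_alpha p u * h_beta p v - h_alpha p v * h_beta p u)"

definition gcoef :: "real \<Rightarrow> real^3 \<Rightarrow> 3 \<Rightarrow> 3 \<Rightarrow> real" where
  "gcoef A p i j = gmetric A p (axis i 1) (axis j 1)"

definition dgcoef :: "real \<Rightarrow> real^3 \<Rightarrow> 3 \<Rightarrow> 3 \<Rightarrow> 3 \<Rightarrow> real" where
  "dgcoef A p k i j = deriv (\<lambda>t. gcoef A (p + t *\<^sub>R axis k 1) i j) 0"

definition christoffel1 :: "real \<Rightarrow> real^3 \<Rightarrow> 3 \<Rightarrow> 3 \<Rightarrow> 3 \<Rightarrow> real" where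
  "christoffel1 A p l i j = (dgcoef A p i j l + dgcoef A p j i l - dgcoef A p l i j) / 2"

text \<open>Magnetic geodesic (defined for all times): twice differentiable curve with
  nabla_{s'} s' = F s', written in coordinates as
  g(nabla_{s'} s', e_l) = Omega(s', e_l) for every coordinate vector e_l
  (this is g(F s', e_l) by definition of F).\<close>

definition magnetic_geodesic :: "real \<Rightarrow> real \<Rightarrow> (real \<Rightarrow> real^3) \<Rightarrow> bool" where
  "magnetic_geodesic A B \<sigma> \<longleftrightarrow>
     (\<forall>t. \<sigma> differentiable (at t)) \<and>
     (\<forall>t. (\<lambda>s. vector_derivative \<sigma> (at s)) differentiable (at t)) \<and>
     (\<forall>t l. let v = vector_derivative \<sigma> (at t);
                a = vector_derivative (\<lambda>s. vector_derivative \<sigma> (at s)) (at t) in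
          (\<Sum>k\<in>UNIV. gcoef A (\<sigma> t) l k * a$k)
          + (\<Sum>i\<in>UNIV. \<Sum>j\<in>UNIV. christoffel1 A (\<sigma> t) l i j * v$i * v$j)
          = mag_form B (\<sigma> t) v (axis l 1))"

definition cocompact_discrete_subgroup :: "(real^3) set \<Rightarrow> bool" where
  "cocompact_discrete_subgroup \<Gamma> \<longleftrightarrow>
     0 \<in> \<Gamma> \<and> (\<forall>g\<in>\<Gamma>. \<forall>h\<in>\<Gamma>. hmul g h \<in> \<Gamma>) \<and> (\<forall>g\<in>\<Gamma>. hinv g \<in> \<Gamma>) \<and>
     (\<forall>g\<in>\<Gamma>. \<exists>e>0. \<forall>h\<in>\<Gamma>. dist h g < e \<longrightarrow> h = g) \<and>
     (\<exists>K. compact K \<and> (\<forall>p. \<exists>g\<in>\<Gamma>. \<exists>k\<in>K. p = hmul g k))"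

definition quotient_periodic :: "(real^3) set \<Rightarrow> (real \<Rightarrow> real^3) \<Rightarrow> bool" where
  "quotient_periodic \<Gamma> \<sigma> \<longleftrightarrow>
     (\<exists>T>0. \<forall>t. \<exists>g\<in>\<Gamma>. \<sigma> (t + T) = hmul g (\<sigma> t))"

text \<open>Energy-E sphere bundle of H (TH = H x R^3 in coordinates).\<close>

definition sphere_bundle :: "real \<Rightarrow> real \<Rightarrow> ((real^3) \<times> (real^3)) set" where
  "sphere_bundle A E = {(p, v). sqrt (gmetric A p v v) = E}"

text \<open>Preimage in S^E H of Per^E(Gamma\H).\<close>

definition per_lift :: "real \<Rightarrow> real \<Rightarrow> (real^3) set \<Rightarrow> real \<Rightarrow> ((real^3) \<times> (real^3)) set" where
  "per_lift A B \<Gamma> E = {(p, v) \<in> sphere_bundle A E. \<exists>\<sigma>. magnetic_geodesic A B \<sigma> \<and>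
      \<sigma> 0 = p \<and> vector_derivative \<sigma> (at 0) = v \<and> quotient_periodic \<Gamma> \<sigma>}"

end

theory Submission
  imports Defs
begin


lemma vec3_eq: "(vector [a,b,c] :: real^3) = a *\<^sub>R axis 1 1 + b *\<^sub>R axis 2 1 + c *\<^sub>R axis 3 1"
  by (simp add: vec_eq_iff forall_3 axis_def)

lemma vec3_deriv:
  assumes "(f1 has_real_derivative d1) (at t)" "(f2 has_real_derivative d2) (at t)"
    "(f3 has_real_derivative d3) (at t)"
  shows "((\<lambda>s. vector [f1 s, f2 s, f3 s] :: real^3) has_vector_derivative vector [d1,d2,d3]) (at t)"
proof -
  have e: "((\<lambda>s. f s *\<^sub>R c) has_vector_derivative d *\<^sub>R c) (at t)"
    if "(f has_real_derivative d) (at t)" for f d and c :: "real^3"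
    using has_vector_derivative_scaleR[OF that has_vector_derivative_const[of c]] by simp
  show ?thesis unfolding vec3_eq
    by (intro has_vector_derivative_add e assms)
qed

definition dd :: "3 \<Rightarrow> 3 \<Rightarrow> real" where "dd i j = (if i = j then 1 else 0)"

lemma gcoef_eq: "gcoef A q i j = A * dd i 1 * dd j 1 + A * dd i 2 * dd j 2 + (dd i 3 - q$1 * dd i 2) * (dd j 3 - q$1 * dd j 2)"
  by (simp add: gcoef_def gmetric_def h_alpha_def h_beta_def h_zeta_def axis_def dd_def)

lemma dgcoef_eq: "dgcoef A p k i j = dd k 1 * (2 * p$1 * dd i 2 * dd j 2 - (dd i 3 * dd j 2 + dd i 2 * dd j 3))"
proof -
  have "((\<lambda>t. gcoef A (p + t *\<^sub>R axis k 1) i j) has_real_derivative dd k 1 * (2 * p$1 * dd i 2 * dd j 2 - (dd i 3 * dd j 2 + dd i 2 * dd j 3))) (at 0)"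
    unfolding gcoef_eq
    by (auto intro!: derivative_eq_intros simp: axis_def dd_def algebra_simps)
  then show ?thesis unfolding dgcoef_def by (rule DERIV_imp_deriv)
qed


definition sx :: "real^3 \<Rightarrow> real \<Rightarrow> real \<Rightarrow> real \<Rightarrow> real \<Rightarrow> real" where
  "sx p r ph c t = p$1 + r/c * (sin (c*t+ph) - sin ph)"
definition sy :: "real^3 \<Rightarrow> real \<Rightarrow> real \<Rightarrow> real \<Rightarrow> real \<Rightarrow> real" where
  "sy p r ph c t = p$2 - r/c * (cos (c*t+ph) - cos ph)"
definition sz :: "real^3 \<Rightarrow> real \<Rightarrow> real \<Rightarrow> real \<Rightarrow> real \<Rightarrow> real \<Rightarrow> real" where
  "sz p r ph c w t = p$3 + w*t + p$1 * (sy p r ph c t - p$2)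
     + r^2/c * (t/2 - (sin (2*(c*t+ph)) - sin (2*ph))/(4*c))
     + r^2/c^2 * sin ph * (cos (c*t+ph) - cos ph)"
definition sig :: "real^3 \<Rightarrow> real \<Rightarrow> real \<Rightarrow> real \<Rightarrow> real \<Rightarrow> real \<Rightarrow> real^3" where
  "sig p r ph c w t = vector [sx p r ph c t, sy p r ph c t, sz p r ph c w t]"
definition vel :: "real^3 \<Rightarrow> real \<Rightarrow> real \<Rightarrow> real \<Rightarrow> real \<Rightarrow> real \<Rightarrow> real^3" where
  "vel p r ph c w t = vector [r * cos (c*t+ph), r * sin (c*t+ph), w + sx p r ph c t * (r * sin (c*t+ph))]"
definition acc :: "real^3 \<Rightarrow> real \<Rightarrow> real \<Rightarrow> real \<Rightarrow> real \<Rightarrow> real \<Rightarrow> real^3" where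
  "acc p r ph c w t = vector [- r * c * sin (c*t+ph), r * c * cos (c*t+ph),
      r * cos (c*t+ph) * (r * sin (c*t+ph)) + sx p r ph c t * (r * c * cos (c*t+ph))]"

lemma sx_deriv: "c \<noteq> 0 \<Longrightarrow> (sx p r ph c has_real_derivative r * cos (c*t+ph)) (at t)"
  unfolding sx_def by (auto intro!: derivative_eq_intros simp: field_simps)

lemma sy_deriv: "c \<noteq> 0 \<Longrightarrow> (sy p r ph c has_real_derivative r * sin (c*t+ph)) (at t)"
  unfolding sy_def by (auto intro!: derivative_eq_intros simp: field_simps)

lemma sz_deriv: "c \<noteq> 0 \<Longrightarrow> (sz p r ph c w has_real_derivative w + sx p r ph c t * (r * sin (c*t+ph))) (at t)"
proof -
  have h: "cos (ph * 2 + c * (t * 2)) = 1 - 2 * (sin (ph + c * t) * sin (ph + c * t))"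
    using cos_double_sin[of "c*t+ph"] by (simp add: algebra_simps power2_eq_square)
  assume "c \<noteq> 0" then show ?thesis
  unfolding sz_def sx_def
  by (auto intro!: derivative_eq_intros sy_deriv simp: field_simps h power2_eq_square)
qed

lemma sig_deriv: "c \<noteq> 0 \<Longrightarrow> (sig p r ph c w has_vector_derivative vel p r ph c w t) (at t)"
  unfolding sig_def vel_def
  by (intro vec3_deriv sx_deriv sy_deriv sz_deriv)

lemma vel_deriv: "c \<noteq> 0 \<Longrightarrow> (vel p r ph c w has_vector_derivative acc p r ph c w t) (at t)"
  unfolding vel_def acc_def
  by (intro vec3_deriv) (auto intro!: derivative_eq_intros sx_deriv simp: algebra_simps)


lemma vd_sig: "c \<noteq> 0 \<Longrightarrow> (\<lambda>s. vector_derivative (sig p r ph c w) (at s)) = vel p r ph c w"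
  using sig_deriv vector_derivative_at by blast

lemma geod:
  assumes "A > 0" "c = (w - B) / A" "c \<noteq> 0"
  shows "magnetic_geodesic A B (sig p r ph c w)"
proof -
  have cA: "w = B + c * A" using assms by (simp add: field_simps)
  have eq: "(\<Sum>k\<in>UNIV. gcoef A (sig p r ph c w t) l k * acc p r ph c w t $ k)
          + (\<Sum>i\<in>UNIV. \<Sum>j\<in>UNIV. christoffel1 A (sig p r ph c w t) l i j * vel p r ph c w t $ i * vel p r ph c w t $ j)
          = mag_form B (sig p r ph c w t) (vel p r ph c w t) (axis l 1)" for t l
  proof -
    have "l = 1 \<or> l = 2 \<or> l = 3" by (rule exhaust_3)
    then show ?thesis
      by (auto simp: sum_3 gcoef_eq christoffel1_def dgcoef_eq dd_def mag_form_def h_alpha_def h_beta_def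
          axis_def vel_def acc_def sig_def cA algebra_simps)
  qed
  show ?thesis
    unfolding magnetic_geodesic_def vd_sig[OF assms(3)] Let_def
  proof (intro conjI allI)
    fix t
    have d1: "(sig p r ph c w has_vector_derivative vel p r ph c w t) (at t)" by (rule sig_deriv[OF assms(3)])
    have d2: "(vel p r ph c w has_vector_derivative acc p r ph c w t) (at t)" by (rule vel_deriv[OF assms(3)])
    show "sig p r ph c w differentiable at t" using d1 by (rule differentiableI_vector)
    show "vel p r ph c w differentiable at t" using d2 by (rule differentiableI_vector)
    fix l
    show "(\<Sum>k\<in>UNIV. gcoef A (sig p r ph c w t) l k * vector_derivative (vel p r ph c w) (at t) $ k) +
        (\<Sum>i\<in>UNIV. \<Sum>j\<in>UNIV. christoffel1 A (sig p r ph c w t) l i j *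
           vector_derivative (sig p r ph c w) (at t) $ i * vector_derivative (sig p r ph c w) (at t) $ j) =
        mag_form B (sig p r ph c w t) (vector_derivative (sig p r ph c w) (at t)) (axis l 1)"
      using eq[of t l] vector_derivative_at[OF d1] vector_derivative_at[OF d2] by simp
  qed
qed

lemma sin_shift: "sin (x + 2 * pi * of_int n) = sin x" "cos (x + 2 * pi * of_int n) = cos x"
  by (simp_all add: sin_add cos_add)

lemma sig_period:
  assumes "c \<noteq> 0" "c * T = 2 * pi * of_int n"
  shows "sig p r ph c w (t + T) = hmul (vector [0, 0, T * (w + r^2 / (2 * c))]) (sig p r ph c w t)"
proof -
  have th: "c * (t + T) + ph = (c * t + ph) + 2 * pi * of_int n" using assms(2) by (simp add: algebra_simps)
  have th2: "2 * (c * (t + T) + ph) = 2 * (c * t + ph) + 2 * pi * of_int (2 * n)" using th by (simp add: algebra_simps)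
  have s1: "sin (c * (t + T) + ph) = sin (c * t + ph)" "cos (c * (t + T) + ph) = cos (c * t + ph)"
    unfolding th sin_shift by simp_all
  have s2: "sin (2 * (c * (t + T) + ph)) = sin (2 * (c * t + ph))"
    unfolding th2 sin_shift by simp
  have x: "sx p r ph c (t + T) = sx p r ph c t" unfolding sx_def s1 ..
  have y: "sy p r ph c (t + T) = sy p r ph c t" unfolding sy_def s1 ..
  have z: "sz p r ph c w (t + T) = sz p r ph c w t + T * (w + r^2 / (2 * c))"
    unfolding sz_def s1 s2 y using assms(1) by (simp add: field_simps)
  show ?thesis
    by (simp add: vec_eq_iff forall_3 hmul_def sig_def x y z)
qed

lemma sig0: "sig p r ph c w 0 = p"
  by (simp add: vec_eq_iff forall_3 sig_def sx_def sy_def sz_def)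

lemma vel0: "vel p r ph c w 0 = vector [r * cos ph, r * sin ph, w + p$1 * (r * sin ph)]"
  by (simp add: vel_def sx_def)

definition cen :: "real \<Rightarrow> real^3" where "cen a = vector [0, 0, a]"

lemma cen_mul: "hmul (cen a) (cen b) = cen (a + b)"
  by (simp add: vec_eq_iff forall_3 hmul_def cen_def)
lemma cen_inv: "hinv (cen a) = cen (- a)"
  by (simp add: vec_eq_iff forall_3 hinv_def cen_def)

lemma cen_pow:
  assumes G: "cocompact_discrete_subgroup \<Gamma>" and g: "cen a \<in> \<Gamma>"
  shows "cen (of_int m * a) \<in> \<Gamma>"
proof -
  have nat: "cen (of_nat k * a) \<in> \<Gamma>" for k
  proof (induction k)
    case 0
    have "cen 0 = 0" by (simp add: cen_def vec_eq_iff forall_3)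
    then show ?case using G by (simp add: cocompact_discrete_subgroup_def)
  next
    case (Suc k)
    then have "hmul (cen (of_nat k * a)) (cen a) \<in> \<Gamma>" using G g by (simp add: cocompact_discrete_subgroup_def)
    then show ?case by (simp add: cen_mul algebra_simps)
  qed
  show ?thesis
  proof (cases "m \<ge> 0")
    case True
    then show ?thesis using nat[of "nat m"] by simp
  next
    case False
    have "hinv (cen (of_nat (nat (- m)) * a)) \<in> \<Gamma>" using G nat unfolding cocompact_discrete_subgroup_def by blast
    then show ?thesis using False by (simp add: cen_inv)
  qed
qed

lemma comm_eq: "hmul (hmul g h) (hmul (hinv g) (hinv h)) = cen (g$1 * h$2 - g$2 * h$1)"
  by (simp add: vec_eq_iff forall_3 hmul_def hinv_def cen_def algebra_simps)

lemma central_elem: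
  assumes G: "cocompact_discrete_subgroup \<Gamma>"
  shows "\<exists>a. a \<noteq> 0 \<and> cen a \<in> \<Gamma>"
proof (rule ccontr)
  assume na: "\<not> ?thesis"
  have mul: "hmul g h \<in> \<Gamma>" and inv: "hinv g \<in> \<Gamma>" if "g \<in> \<Gamma>" "h \<in> \<Gamma>" for g h
    using G that unfolding cocompact_discrete_subgroup_def by blast+
  have det0: "g$1 * h$2 - g$2 * h$1 = 0" if "g \<in> \<Gamma>" "h \<in> \<Gamma>" for g h
  proof -
    have "cen (g$1 * h$2 - g$2 * h$1) \<in> \<Gamma>"
      using mul inv that comm_eq[of g h] by metis
    then show ?thesis using na by blast
  qed
  obtain K where K: "compact K" "\<forall>p. \<exists>g\<in>\<Gamma>. \<exists>k\<in>K. p = hmul g k"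
    using G unfolding cocompact_discrete_subgroup_def by blast
  obtain M where M: "\<forall>k\<in>K. norm k \<le> M"
    using compact_imp_bounded[OF K(1)] unfolding bounded_iff by blast
  have kb: "\<bar>k$i\<bar> \<le> M" if "k \<in> K" for k i
    using M that component_le_norm_cart[of k i] by force
  show False
  proof (cases "\<forall>g\<in>\<Gamma>. g$1 = 0 \<and> g$2 = 0")
    case True
    obtain g k where gk: "g \<in> \<Gamma>" "k \<in> K" "vector [M + 1, 0, 0] = hmul g k"
      using K(2) by blast
    then have "M + 1 = g$1 + k$1" by (metis hmul_def vector_3(1))
    then have "M + 1 = k$1" using True gk(1) by simp
    then show False using kb[OF gk(2), of 1] by simp
  next
    case False
    then obtain g0 where g0: "g0 \<in> \<Gamma>" "\<not> (g0$1 = 0 \<and> g0$2 = 0)" by blast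
    define u1 where "u1 = g0$1"
    define u2 where "u2 = g0$2"
    have pos: "u1^2 + u2^2 > 0" using g0(2) unfolding u1_def u2_def
      by (simp add: sum_power2_gt_zero_iff)
    define t where "t = (M * (\<bar>u1\<bar> + \<bar>u2\<bar>) + 1) / (u1^2 + u2^2)"
    have tt: "t * u2 * u2 + t * u1 * u1 = M * (\<bar>u1\<bar> + \<bar>u2\<bar>) + 1"
    proof -
      have "t * (u1^2 + u2^2) = M * (\<bar>u1\<bar> + \<bar>u2\<bar>) + 1" proof -
        have g: "N / D * D = N" if "D > 0" for N D :: real using that by simp
        show ?thesis unfolding t_def by (rule g[OF pos])
      qed
      then show ?thesis by (simp add: algebra_simps power2_eq_square)
    qed
    obtain g k where gk: "g \<in> \<Gamma>" "k \<in> K" "vector [t * u2, - t * u1, 0] = hmul g k"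
      using K(2) by blast
    then have e1: "t * u2 = g$1 + k$1" and e2: "- t * u1 = g$2 + k$2"
      by (metis hmul_def vector_3(1), metis hmul_def vector_3(2))
    have d: "g$1 * u2 - g$2 * u1 = 0" using det0[OF gk(1) g0(1)] unfolding u1_def u2_def .
    have "(g$1 + k$1) * u2 - (g$2 + k$2) * u1 = k$1 * u2 - k$2 * u1"
      using d by (simp add: algebra_simps)
    then have eq: "M * (\<bar>u1\<bar> + \<bar>u2\<bar>) + 1 = k$1 * u2 - k$2 * u1"
    proof -
      have "(g$1 + k$1) * u2 - (g$2 + k$2) * u1 = t * u2 * u2 + t * u1 * u1"
        unfolding e1[symmetric] e2[symmetric] by (simp add: algebra_simps)
      then show ?thesis using tt \<open>(g$1 + k$1) * u2 - (g$2 + k$2) * u1 = k$1 * u2 - k$2 * u1\<close> by simp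
    qed
    have b1: "k$1 * u2 \<le> M * \<bar>u2\<bar>"
    proof -
      have "k$1 * u2 \<le> \<bar>k$1\<bar> * \<bar>u2\<bar>" by (metis abs_ge_self abs_mult)
      also have "\<dots> \<le> M * \<bar>u2\<bar>" by (rule mult_right_mono[OF kb[OF gk(2)]]) simp
      finally show ?thesis .
    qed
    have b2: "- (k$2 * u1) \<le> M * \<bar>u1\<bar>"
    proof -
      have "- (k$2 * u1) \<le> \<bar>k$2\<bar> * \<bar>u1\<bar>" by (metis abs_ge_minus_self abs_mult)
      also have "\<dots> \<le> M * \<bar>u1\<bar>" by (rule mult_right_mono[OF kb[OF gk(2)]]) simp
      finally show ?thesis .
    qed
    show False using eq b1 b2 by (simp add: algebra_simps)
  qed
qed

definition ff :: "real \<Rightarrow> real \<Rightarrow> real \<Rightarrow> real \<Rightarrow> real \<Rightarrow> real" where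
  "ff A B E g u = (2 * pi / \<bar>(u - B) / A\<bar>) * (u + ((E^2 - u^2) / A) / (2 * ((u - B) / A))) / g"

lemma per_point:
  assumes A: "A > 0" and G: "cocompact_discrete_subgroup \<Gamma>" and g: "cen g \<in> \<Gamma>" "g \<noteq> 0"
    and u: "u \<noteq> B" "\<bar>u\<bar> \<le> E" and E: "E > 0"
    and k: "k > 0" and fu: "ff A B E g u = of_int m / of_int k"
  shows "(p, vel p (sqrt ((E^2 - u^2) / A)) ph ((u - B) / A) u 0) \<in> per_lift A B \<Gamma> E"
proof -
  define c where "c = (u - B) / A"
  define r where "r = sqrt ((E^2 - u^2) / A)"
  have c0: "c \<noteq> 0" using u A by (simp add: c_def)
  have u2: "u^2 \<le> E^2" using u(2) by (metis abs_le_square_iff abs_of_pos E)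
  have r2: "r^2 = (E^2 - u^2) / A" unfolding r_def using u2 A by simp
  define T where "T = 2 * pi * of_int k / \<bar>c\<bar>"
  have Tpos: "T > 0" unfolding T_def using k c0 by simp
  define n where "n = (if c > 0 then k else - k)"
  have cT: "c * T = 2 * pi * of_int n"
    unfolding T_def n_def using c0 by (auto simp: abs_if field_simps)
  have drift: "T * (u + r^2 / (2 * c)) = of_int m * g"
  proof -
    have fg: "ff A B E g u * g = (2 * pi / \<bar>c\<bar>) * (u + r^2 / (2 * c))"
      unfolding ff_def r2 c_def using g(2) by simp
    have "T * (u + r^2 / (2 * c)) = of_int k * (ff A B E g u * g)"
      unfolding fg T_def by simp
    also have "\<dots> = of_int k * ff A B E g u * g" by simp
    also have "\<dots> = of_int m * g" using fu k by simp
    finally show ?thesis .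
  qed
  have sph: "(p, vel p r ph c u 0) \<in> sphere_bundle A E"
  proof -
    have sc: "cos ph * cos ph = 1 - sin ph * sin ph" using sin_cos_squared_add[of ph] by (simp add: power2_eq_square)
    have "gmetric A p (vel p r ph c u 0) (vel p r ph c u 0) = A * r^2 + u^2"
      by (simp add: gmetric_def vel0 h_alpha_def h_beta_def h_zeta_def power2_eq_square algebra_simps sc)
    also have "\<dots> = E^2" using r2 A by simp
    finally show ?thesis using E by (simp add: sphere_bundle_def)
  qed
  have per: "quotient_periodic \<Gamma> (sig p r ph c u)"
    unfolding quotient_periodic_def
  proof (intro exI[of _ T] conjI allI Tpos)
    fix t
    have "sig p r ph c u (t + T) = hmul (cen (of_int m * g)) (sig p r ph c u t)"
      using sig_period[OF c0 cT, of p r ph u t] drift by (simp add: cen_def)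
    then show "\<exists>h\<in>\<Gamma>. sig p r ph c u (t + T) = hmul h (sig p r ph c u t)"
      using cen_pow[OF G g(1)] by blast
  qed
  have "magnetic_geodesic A B (sig p r ph c u)"
    by (rule geod[OF A c_def c0])
  moreover have "vector_derivative (sig p r ph c u) (at 0) = vel p r ph c u 0"
    using sig_deriv[OF c0] vector_derivative_at by blast
  ultimately show ?thesis
    using sph per sig0 unfolding per_lift_def c_def[symmetric] r_def[symmetric] by blast
qed



lemma ff_pos: assumes "A > 0" "g \<noteq> 0" "B < u"
  shows "ff A B E g u = pi * A / g * (1 + (E^2 - B^2) / (u - B)^2)"
proof -
  define s where "s = u - B"
  have s: "s > 0" "u = B + s" using assms unfolding s_def by auto
  have a: "\<bar>(u - B) / A\<bar> = s / A" using assms s unfolding s_def by simp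
  have b: "((E^2 - u^2) / A) / (2 * ((u - B) / A)) = (E^2 - u^2) / (2 * s)"
    using assms s unfolding s_def by simp
  have c: "2 * pi / (s / A) = 2 * pi * A / s" by simp
  have d: "u + (E^2 - u^2) / (2 * s) = (s^2 + (E^2 - B^2)) / (2 * s)"
    using s by (simp add: field_simps power2_eq_square)
  have "ff A B E g u = 2 * pi * A / s * ((s^2 + (E^2 - B^2)) / (2 * s)) / g"
    unfolding ff_def a b c d ..
  also have "\<dots> = pi * A / g * (1 + (E^2 - B^2) / s^2)"
    using s assms by (simp add: field_simps power2_eq_square)
  finally show ?thesis unfolding s_def .
qed

lemma ff_neg: assumes "A > 0" "g \<noteq> 0" "u < B"
  shows "ff A B E g u = - (pi * A / g * (1 + (E^2 - B^2) / (u - B)^2))"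
proof -
  define s where "s = u - B"
  have s: "s < 0" "u = B + s" using assms unfolding s_def by auto
  have "(u - B) / A < 0" using assms by (simp add: divide_less_0_iff)
  then have "\<bar>(u - B) / A\<bar> = - ((u - B) / A)" by (rule abs_of_neg)
  then have a: "\<bar>(u - B) / A\<bar> = - s / A" by (simp add: s_def minus_divide_left)
  have b: "((E^2 - u^2) / A) / (2 * ((u - B) / A)) = (E^2 - u^2) / (2 * s)"
    using assms s unfolding s_def by simp
  have c: "2 * pi / (- s / A) = - (2 * pi * A / s)" by simp
  have d: "u + (E^2 - u^2) / (2 * s) = (s^2 + (E^2 - B^2)) / (2 * s)"
    using s by (simp add: field_simps power2_eq_square)
  have "ff A B E g u = - (2 * pi * A / s) * ((s^2 + (E^2 - B^2)) / (2 * s)) / g"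
    unfolding ff_def a b c d ..
  also have "\<dots> = - (pi * A / g * (1 + (E^2 - B^2) / s^2))"
    using s assms by (simp add: field_simps power2_eq_square)
  finally show ?thesis unfolding s_def .
qed

lemma ff_ne:
  assumes A: "A > 0" and g: "g \<noteq> 0" and E: "E > \<bar>B\<bar>" and w: "w1 < w2" "B < w1 \<or> w2 < B"
  shows "ff A B E g w1 \<noteq> ff A B E g w2"
proof -
  have "\<bar>B\<bar>^2 < E^2" by (rule power_strict_mono) (use E in auto)
  then have D: "E^2 - B^2 > 0" by simp
  have K: "pi * A / g \<noteq> 0" using A g by simp
  have lt: "(E^2 - B^2) / (w1 - B)^2 \<noteq> (E^2 - B^2) / (w2 - B)^2"
  proof -
    have "(w1 - B)^2 \<noteq> (w2 - B)^2"
    proof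
      assume "(w1 - B)^2 = (w2 - B)^2"
      then have "\<bar>w1 - B\<bar> = \<bar>w2 - B\<bar>" by (metis power2_abs abs_ge_zero power2_eq_iff_nonneg)
      then show False using w by auto
    qed
    moreover have "(w1 - B)^2 > 0" "(w2 - B)^2 > 0" using w by auto
    ultimately show ?thesis using D by (simp add: divide_cancel_left)
  qed
  show ?thesis
  proof (cases "B < w1")
    case True
    have e1: "ff A B E g w1 = pi * A / g * (1 + (E^2 - B^2) / (w1 - B)^2)" by (rule ff_pos[OF A g True])
    have e2: "ff A B E g w2 = pi * A / g * (1 + (E^2 - B^2) / (w2 - B)^2)" by (rule ff_pos[OF A g]) (use True w in auto)
    show ?thesis unfolding e1 e2 using K lt by simp
  next
    case False
    then have "w2 < B" using w by auto
    have e1: "ff A B E g w1 = - (pi * A / g * (1 + (E^2 - B^2) / (w1 - B)^2))" by (rule ff_neg[OF A g]) (use \<open>w2 < B\<close> w in auto)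
    have e2: "ff A B E g w2 = - (pi * A / g * (1 + (E^2 - B^2) / (w2 - B)^2))" by (rule ff_neg[OF A g]) fact
    show ?thesis unfolding e1 e2 using K lt by simp
  qed
qed

lemma find_u:
  assumes A: "A > 0" and g: "g \<noteq> 0" and E: "E > \<bar>B\<bar>" and w: "w1 < w2" "B < w1 \<or> w2 < B"
  shows "\<exists>u m k. w1 \<le> u \<and> u \<le> w2 \<and> k > 0 \<and> ff A B E g u = of_int m / of_int k"
proof -
  have ne: "ff A B E g w1 \<noteq> ff A B E g w2" by (rule ff_ne[OF A g E w])
  have cont: "continuous_on {w1..w2} (ff A B E g)"
  proof -
    have "\<forall>u\<in>{w1..w2}. u - B \<noteq> 0" using w by auto
    then show ?thesis unfolding ff_def using A g
      by (intro continuous_intros) auto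
  qed
  have lt: "min (ff A B E g w1) (ff A B E g w2) < max (ff A B E g w1) (ff A B E g w2)"
    using ne by (cases "ff A B E g w1 \<le> ff A B E g w2") (auto simp: min_def max_def)
  obtain q where q: "q \<in> \<rat>" "min (ff A B E g w1) (ff A B E g w2) < q" "q < max (ff A B E g w1) (ff A B E g w2)"
    using Rats_dense_in_real[OF lt] by blast
  obtain u where u: "w1 \<le> u" "u \<le> w2" "ff A B E g u = q"
  proof (cases "ff A B E g w1 \<le> ff A B E g w2")
    case True
    then show ?thesis using IVT'[of "ff A B E g" w1 q w2] q cont w that by (auto simp: min_def max_def)
  next
    case False
    then show ?thesis using IVT2'[of "ff A B E g" w2 q w1] q cont w that by (auto simp: min_def max_def)
  qed
  obtain m k where "k > 0" "q = of_int m / of_int k" using Rats_cases'[OF q(1)] by metis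
  then show ?thesis using u by blast
qed


lemma interval:
  fixes B E w d :: real
  assumes E: "E > \<bar>B\<bar>" and w: "\<bar>w\<bar> \<le> E" and d: "d > 0"
  shows "\<exists>w1 w2. w1 < w2 \<and> (B < w1 \<or> w2 < B) \<and> (\<forall>u. w1 \<le> u \<and> u \<le> w2 \<longrightarrow> \<bar>u - w\<bar> < d \<and> \<bar>u\<bar> \<le> E)"
proof -
  consider "B < w" | "w < B" | "w = B" by linarith
  then show ?thesis
  proof cases
    case 1
    show ?thesis
      by (rule exI[of _ "max (w - d/2) ((w + B)/2)"], rule exI[of _ w]) (use 1 E w d in \<open>auto simp: less_max_iff_disj max_def\<close>)
  next
    case 2
    show ?thesis
      by (rule exI[of _ w], rule exI[of _ "min (w + d/2) ((w + B)/2)"]) (use 2 E w d in \<open>auto simp: min_less_iff_disj min_def\<close>)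
  next
    case 3
    define h where "h = min (d/2) (E - B)"
    have h: "h > 0" "h \<le> d/2" "h \<le> E - B" using d E unfolding h_def by (auto simp: min_def)
    show ?thesis
      by (rule exI[of _ "B + h/2"], rule exI[of _ "B + h"]) (use 3 h E in auto)
  qed
qed


theorem theorem4p17:
  fixes A B E :: real and \<Gamma> :: "(real^3) set"
  assumes "A > 0"
    and "cocompact_discrete_subgroup \<Gamma>"
    and "E > \<bar>B\<bar>"
  shows "sphere_bundle A E \<subseteq> closure (per_lift A B \<Gamma> E)"
proof
  fix pv assume pv: "pv \<in> sphere_bundle A E"
  obtain p v where pv_eq: "pv = (p, v)" by (cases pv)
  have A: "A > 0" and G: "cocompact_discrete_subgroup \<Gamma>" and E: "E > \<bar>B\<bar>" using assms by auto
  have E0: "E > 0" using E by linarith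
  obtain g where g: "g \<noteq> 0" "cen g \<in> \<Gamma>" using central_elem[OF G] by blast
  define a where "a = v$1"
  define b where "b = v$2"
  define w where "w = v$3 - p$1 * v$2"
  have gm: "gmetric A p v v = A * a^2 + A * b^2 + w^2"
    by (simp add: gmetric_def h_alpha_def h_beta_def h_zeta_def a_def b_def w_def power2_eq_square)
  have gm0: "gmetric A p v v \<ge> 0" unfolding gm using A by simp
  have "sqrt (gmetric A p v v) = E" using pv unfolding pv_eq sphere_bundle_def by simp
  then have gmE: "A * a^2 + A * b^2 + w^2 = E^2" using gm0 gm by (metis real_sqrt_pow2)
  have ab0: "A * a^2 + A * b^2 \<ge> 0" using A by simp
  have w2: "w^2 \<le> E^2" using gmE ab0 by linarith
  have wE: "\<bar>w\<bar> \<le> E" using w2 E0 by (metis abs_le_square_iff abs_of_pos)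
  define rho where "rho = (\<lambda>u. sqrt ((E^2 - u^2) / A))"
  define r where "r = rho w"
  have ab_r: "a^2 + b^2 = r^2"
  proof -
    have "a^2 + b^2 = (E^2 - w^2) / A" using gmE A by (simp add: field_simps)
    moreover have "(E^2 - w^2) / A \<ge> 0" using w2 A by (intro divide_nonneg_pos) auto
    ultimately show ?thesis unfolding r_def rho_def by (metis real_sqrt_pow2)
  qed
  have r0: "r \<ge> 0" unfolding r_def rho_def by (rule real_sqrt_ge_zero) (use w2 A in \<open>intro divide_nonneg_pos, auto\<close>)
  obtain ph where ph: "a = r * cos ph" "b = r * sin ph"
  proof (cases "r = 0")
    case True
    then have "a = 0" "b = 0" using ab_r by (simp_all add: sum_power2_eq_zero_iff)
    then show ?thesis using that[of 0] True by simp
  next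
    case False
    then have rp: "r > 0" using r0 by simp
    have "(a / r)^2 + (b / r)^2 = 1" using ab_r rp by (simp add: power_divide add_divide_distrib[symmetric])
    then obtain t where "a / r = cos t" "b / r = sin t" using sincos_total_2pi by metis
    then show ?thesis using that[of t] rp by (simp add: field_simps)
  qed
  show "pv \<in> closure (per_lift A B \<Gamma> E)"
    unfolding closure_approachable pv_eq
  proof (intro allI impI)
    fix e :: real assume e: "e > 0"
    define e1 where "e1 = e / (2 * (2 + \<bar>p$1\<bar>))"
    have e1: "e1 > 0" unfolding e1_def using e by (simp add: add_pos_nonneg)
    have "isCont rho w" unfolding rho_def using A by (auto intro!: continuous_intros)
    then obtain d where d: "d > 0" "\<forall>u. u \<noteq> w \<and> norm (u - w) < d \<longrightarrow> norm (rho u - rho w) < e1"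
      unfolding isCont_def LIM_eq using e1 by blast
    have dr: "\<bar>rho u - r\<bar> < e1" if "\<bar>u - w\<bar> < d" for u
      using d(2) that e1 unfolding r_def by (cases "u = w") auto
    define d' where "d' = min d (e / 2)"
    have d': "d' > 0" unfolding d'_def using d e by simp
    obtain w1 w2 where ww: "w1 < w2" "B < w1 \<or> w2 < B"
      "\<forall>u. w1 \<le> u \<and> u \<le> w2 \<longrightarrow> \<bar>u - w\<bar> < d' \<and> \<bar>u\<bar> \<le> E"
      using interval[OF E wE d'] by blast
    obtain u m k where umk: "w1 \<le> u" "u \<le> w2" "k > 0" "ff A B E g u = of_int m / of_int k"
      using find_u[OF A g(1) E ww(1,2)] by blast
    have uw: "\<bar>u - w\<bar> < d'" and uE: "\<bar>u\<bar> \<le> E" using ww(3) umk(1,2) by auto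
    have uB: "u \<noteq> B" using ww(1,2) umk(1,2) by auto
    define V where "V = vel p (rho u) ph ((u - B) / A) u 0"
    have mem: "(p, V) \<in> per_lift A B \<Gamma> E"
      unfolding V_def rho_def by (rule per_point[OF A G g(2) g(1) uB uE E0 umk(3) umk(4)])
    have rr: "\<bar>rho u - r\<bar> < e1" using dr uw unfolding d'_def by simp
    have uw2: "\<bar>u - w\<bar> < e / 2" using uw unfolding d'_def by simp
    have V1: "V$1 - v$1 = (rho u - r) * cos ph" unfolding V_def vel0 using ph a_def by (simp add: algebra_simps)
    have V2: "V$2 - v$2 = (rho u - r) * sin ph" unfolding V_def vel0 using ph b_def by (simp add: algebra_simps)
    have V3: "V$3 - v$3 = (u - w) + p$1 * ((rho u - r) * sin ph)"
      unfolding V_def vel0 using ph b_def w_def by (simp add: algebra_simps)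
    have c1: "\<bar>(rho u - r) * cos ph\<bar> \<le> \<bar>rho u - r\<bar>"
      by (simp add: abs_mult mult_left_le)
    have c2: "\<bar>(rho u - r) * sin ph\<bar> \<le> \<bar>rho u - r\<bar>"
      by (simp add: abs_mult mult_left_le)
    have c3: "\<bar>p$1 * ((rho u - r) * sin ph)\<bar> \<le> \<bar>p$1\<bar> * \<bar>rho u - r\<bar>"
      using c2 by (simp add: abs_mult mult_left_mono)
    have "dist (p, V) (p, v) = norm (V - v)" by (simp add: dist_Pair_Pair dist_norm)
    also have "\<dots> \<le> \<bar>(V - v)$1\<bar> + \<bar>(V - v)$2\<bar> + \<bar>(V - v)$3\<bar>"
      using norm_le_l1_cart[of "V - v"] by (simp add: sum_3)
    also have "\<dots> \<le> (2 + \<bar>p$1\<bar>) * \<bar>rho u - r\<bar> + \<bar>u - w\<bar>"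
    proof -
      have c4: "\<bar>(u - w) + p$1 * ((rho u - r) * sin ph)\<bar> \<le> \<bar>u - w\<bar> + \<bar>p$1\<bar> * \<bar>rho u - r\<bar>"
        using abs_triangle_ineq[of "u - w" "p$1 * ((rho u - r) * sin ph)"] c3 by linarith
      show ?thesis unfolding vector_minus_component V1 V2 V3 using c1 c2 c4 by (simp add: algebra_simps)
    qed
    also have "\<dots> < (2 + \<bar>p$1\<bar>) * e1 + e / 2"
      using rr uw2 by (intro add_le_less_mono mult_left_mono) auto
    also have "\<dots> = e" unfolding e1_def by (simp add: field_simps)
    finally show "\<exists>y\<in>per_lift A B \<Gamma> E. dist y (p, v) < e" using mem by blast
  qed
qed

end
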